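(* Fix a node $\ell$ and the other nodes' probabilities $\mathbf{P}_{-\ell}\in[0,1]^{N-1}$, and write $\beta_\ell=e^{-\rho_{\ell2}}\prod_{k\neq\ell}(1-p_k)$. Let $p_\ell(1)\in[p_\ell^{min},1]$ and let $(v_\ell(t))_{t\ge1}$ be random variables such that, with $$p_\ell(t+1)=\max\{p_\ell^{min},\,p_\ell(t)+\kappa(t)v_\ell(t)\},$$ one has for all $t$: $|v_\ell(t)|\le M$ for a constant $M<\infty$, $v_\ell(t)\le 1-p_\ell(t)$, and $$\mathbb{E}\{v_\ell(t)\mid p_\ell(1),\dots,p_\ell(t)\}=e^{-\alpha_\ell p_\ell(t)}-p_\ell(t)\beta_\ell-p_\ell(t).$$ If the deterministic learning rates satisfy $\kappa(t)\in(0,1]$ for all $t$, $\sum_{t}\kappa(t)=\infty$ and $\sum_t\kappa(t)^2<\infty$, then $p_\ell(t)$ converges almost surely to the best response $p_\ell^{br}=\arg\max_{p\in[p_\ell^{min},1]}U_\ell(p;\mathbf{P}_{-\ell})$.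
   Context: Game $\mathcal{G}$: node $\ell$ has parameters $c_\ell>0$, $\rho_{\ell1}>0$, $\rho_{\ell2}>0$, $p_\ell^{min}\in(0,1)$, $\alpha_\ell=c_\ell\rho_{\ell1}$, and virtual utility $$U_\ell(p_\ell;\mathbf{P}_{-\ell})=-\frac{e^{-\alpha_\ell p_\ell}}{\alpha_\ell}-\frac{p_\ell^2}{2}\Big(1+e^{-\rho_{\ell2}}\prod_{k\ne\ell}(1-p_k)\Big)+\frac{1+\alpha_\ell}{\alpha_\ell}.$$ In the paper's learning algorithm, $v_\ell(t)=e^{-\rho_{\ell1}C_\ell^{av}(t)}-\frac{1}{(1+\Delta_\ell^{av}(t))e^{\rho_{\ell2}}}-p_\ell(t)$, where $C_\ell^{av}(t)$ and $\Delta_\ell^{av}(t)$ are node $\ell$'s empirical average transmission cost and empirical time-averaged age over frame $t$; the conditional-expectation hypothesis above is the idealization of this (large frame length) used in the paper. *)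

theory Defs
  imports "HOL-Probability.Probability" "HOL-Probability.Conditional_Expectation"
begin

text \<open>Nodes are indexed by {1..N}; node l is the one under consideration, P k is the
  transmission probability of node k (only k in {1..N} - {l} matters).\<close>

definition beta_coef :: "real \<Rightarrow> nat \<Rightarrow> nat \<Rightarrow> (nat \<Rightarrow> real) \<Rightarrow> real" where
  "beta_coef rho2 N l P = exp (- rho2) * (\<Prod>k\<in>{1..N} - {l}. (1 - P k))"

definition virt_util :: "real \<Rightarrow> real \<Rightarrow> real \<Rightarrow> nat \<Rightarrow> nat \<Rightarrow> (nat \<Rightarrow> real) \<Rightarrow> real \<Rightarrow> real" where
  "virt_util c rho1 rho2 N l P p =
     (let \<alpha> = c * rho1 in
       - exp (- \<alpha> * p) / \<alpha>
       - p\<^sup>2 / 2 * (1 + exp (- rho2) * (\<Prod>k\<in>{1..N} - {l}. (1 - P k)))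
       + (1 + \<alpha>) / \<alpha>)"

definition best_response :: "real \<Rightarrow> real \<Rightarrow> real \<Rightarrow> real \<Rightarrow> nat \<Rightarrow> nat \<Rightarrow> (nat \<Rightarrow> real) \<Rightarrow> real" where
  "best_response c rho1 rho2 pmin N l P =
     (THE p. p \<in> {pmin..1} \<and>
        (\<forall>q\<in>{pmin..1}. virt_util c rho1 rho2 N l P q \<le> virt_util c rho1 rho2 N l P p))"

definition hist_alg :: "'a measure \<Rightarrow> (nat \<Rightarrow> 'a \<Rightarrow> real) \<Rightarrow> nat \<Rightarrow> 'a measure" where
  "hist_alg M p t =
     sigma (space M) (\<Union>s\<in>{1..t}. {p s -` B \<inter> space M | B. B \<in> sets borel})"

end

theory Submission
  imports Defs "HOL-Probability.Probability" "HOL-Probability.Conditional_Expectation"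
begin


lemma det_upper:
  fixes p q g kap :: "nat \<Rightarrow> real" and a B \<delta> L \<epsilon> :: real
  assumes dpos: "\<delta> > 0" and Bpos: "B \<ge> 0" and epos: "\<epsilon> > 0"
    and kpos: "\<And>t. t \<ge> 1 \<Longrightarrow> kap t > 0"
    and k0: "kap \<longlonglongrightarrow> 0"
    and kdiv: "filterlim (\<lambda>n. \<Sum>t=1..n. kap t) at_top sequentially"
    and qp: "(\<lambda>t. q t - p t) \<longlonglongrightarrow> 0"
    and qrec: "\<And>t. t \<ge> 1 \<Longrightarrow> q (Suc t) = q t + kap t * g t"
    and gB: "\<And>t. t \<ge> 1 \<Longrightarrow> g t \<le> B"
    and gneg: "eventually (\<lambda>t. p t \<ge> a \<longrightarrow> g t \<le> -\<delta>) sequentially"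
    and pL: "\<And>t. t \<ge> 1 \<Longrightarrow> p t \<ge> L"
  shows "eventually (\<lambda>t. p t \<le> a + \<epsilon>) sequentially"
proof -
  have e1: "eventually (\<lambda>t. \<bar>q t - p t\<bar> < \<epsilon>/3) sequentially"
  proof -
    have "\<forall>e>0. eventually (\<lambda>t. \<bar>q t - p t\<bar> < e) sequentially"
      using qp unfolding tendsto_iff dist_real_def by simp
    moreover have "\<epsilon>/3 > 0" using epos by simp
    ultimately show ?thesis by blast
  qed
  have kB: "(\<lambda>t. kap t * B) \<longlonglongrightarrow> 0 * B" by (intro tendsto_intros k0)
  have e2: "eventually (\<lambda>t. kap t * B < \<epsilon>/3) sequentially"
    using order_tendstoD(2)[OF kB, of "\<epsilon>/3"] epos by simp
  have "eventually (\<lambda>t. \<bar>q t - p t\<bar> < \<epsilon>/3 \<and> kap t * B < \<epsilon>/3 \<and> (p t \<ge> a \<longrightarrow> g t \<le> -\<delta>) \<and> t \<ge> 1) sequentially"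
    using e1 e2 gneg eventually_ge_at_top[of 1] by eventually_elim auto
  then obtain T where T: "\<And>t. t \<ge> T \<Longrightarrow> \<bar>q t - p t\<bar> < \<epsilon>/3 \<and> kap t * B < \<epsilon>/3 \<and> (p t \<ge> a \<longrightarrow> g t \<le> -\<delta>) \<and> t \<ge> 1"
    by (auto simp: eventually_sequentially)
  have "Bseq (\<lambda>t. q t - p t)" using qp convergent_imp_Bseq convergentI by blast
  then obtain K where K: "\<And>t. \<bar>q t - p t\<bar> \<le> K" by (auto simp: Bseq_def)
  have qL: "q t \<ge> L - K" if "t \<ge> 1" for t using K[of t] pL[of t] that by linarith
  have "\<exists>t0\<ge>T. p t0 < a"
  proof (rule ccontr)
    assume "\<not> ?thesis"
    then have pa: "\<And>t. t \<ge> T \<Longrightarrow> p t \<ge> a" by force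
    have dec: "q (Suc n) \<le> q T - \<delta> * (\<Sum>t=T..n. kap t)" if "n \<ge> T" for n
      using that
    proof (induction n rule: dec_induct)
      case base
      have "g T \<le> -\<delta>" using T[of T] pa[of T] by auto
      moreover have "kap T > 0" using T[of T] kpos by auto
      ultimately have "kap T * g T \<le> kap T * (-\<delta>)" by (intro mult_left_mono) auto
      then show ?case using qrec[of T] T[of T] by (simp add: algebra_simps)
    next
      case (step n)
      have "g (Suc n) \<le> -\<delta>" using T[of "Suc n"] pa[of "Suc n"] step by auto
      moreover have "kap (Suc n) > 0" using kpos[of "Suc n"] by auto
      ultimately have "kap (Suc n) * g (Suc n) \<le> kap (Suc n) * (-\<delta>)" by (intro mult_left_mono) auto
      then show ?case using qrec[of "Suc n"] step by (simp add: algebra_simps)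
    qed
    define C where "C = (\<Sum>t=1..<T. kap t) + (q T - (L - K)) / \<delta> + 1"
    have "eventually (\<lambda>n. (\<Sum>t=1..n. kap t) \<ge> C) sequentially"
      using kdiv by (simp add: filterlim_at_top)
    then obtain N where N: "\<And>n. n \<ge> N \<Longrightarrow> (\<Sum>t=1..n. kap t) \<ge> C"
      by (auto simp: eventually_sequentially)
    define n where "n = max N T"
    have n: "n \<ge> T" "(\<Sum>t=1..n. kap t) \<ge> C" using N[of n] unfolding n_def by auto
    have T1: "T \<ge> 1" using T[of T] by auto
    have split: "(\<Sum>t=1..n. kap t) = (\<Sum>t=1..<T. kap t) + (\<Sum>t=T..n. kap t)"
    proof -
      have "{1..n} = {1..<T} \<union> {T..n}" using n T1 by auto
      moreover have "sum kap ({1..<T} \<union> {T..n}) = sum kap {1..<T} + sum kap {T..n}"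
        by (rule sum.union_disjoint) auto
      ultimately show ?thesis by simp
    qed
    have "(\<Sum>t=T..n. kap t) \<ge> (q T - (L - K)) / \<delta> + 1" using n split C_def by linarith
    then have "\<delta> * (\<Sum>t=T..n. kap t) \<ge> \<delta> * ((q T - (L - K)) / \<delta> + 1)"
      using dpos by (intro mult_left_mono) auto
    also have "\<delta> * ((q T - (L - K)) / \<delta> + 1) = q T - (L - K) + \<delta>" using dpos by (simp add: field_simps)
    finally have "q (Suc n) < L - K" using dec[OF n(1)] dpos by linarith
    then show False using qL[of "Suc n"] by simp
  qed
  then obtain t0 where t0: "t0 \<ge> T" "p t0 < a" by blast
  have inv: "p s < a \<or> (\<exists>r. t0 \<le> r \<and> r < s \<and> p r < a \<and> q s \<le> q r + kap r * B)" if "s \<ge> t0" for s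
    using that
  proof (induction s rule: dec_induct)
    case base then show ?case using t0 by auto
  next
    case (step s)
    have sT: "s \<ge> T" using step t0 by auto
    have kp: "kap s > 0" using T[OF sT] kpos by auto
    show ?case
    proof (cases "p (Suc s) < a")
      case True then show ?thesis by auto
    next
      case False
      show ?thesis
      proof (cases "p s < a")
        case True
        have "kap s * g s \<le> kap s * B" using gB[of s] T[OF sT] kp by (intro mult_left_mono) auto
        then have "q (Suc s) \<le> q s + kap s * B" using qrec[of s] T[OF sT] by auto
        then show ?thesis using True step by (intro disjI2 exI[of _ s]) auto
      next
        case False
        then have "g s \<le> -\<delta>" using T[OF sT] by auto
        then have "kap s * g s \<le> 0" using kp dpos by (simp add: mult_nonneg_nonpos)
        then have "q (Suc s) \<le> q s" using qrec[of s] T[OF sT] by auto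
        then show ?thesis using step.IH False by (auto intro: le_SucI)
      qed
    qed
  qed
  show ?thesis unfolding eventually_sequentially
  proof (intro exI allI impI)
    fix s assume s: "s \<ge> t0"
    show "p s \<le> a + \<epsilon>"
    proof (cases "p s < a")
      case True then show ?thesis using epos by auto
    next
      case False
      then obtain r where r: "t0 \<le> r" "r < s" "p r < a" "q s \<le> q r + kap r * B" using inv[OF s] by auto
      have "\<bar>q s - p s\<bar> < \<epsilon>/3" "\<bar>q r - p r\<bar> < \<epsilon>/3" "kap r * B < \<epsilon>/3"
        using T[of s] T[of r] r s t0 by auto
      then show ?thesis using r by linarith
    qed
  qed
qed

lemma det_conv:
  fixes p g z kap :: "nat \<Rightarrow> real" and f :: "real \<Rightarrow> real" and pmin Mb ps :: real
  assumes kpos: "\<And>t. t \<ge> 1 \<Longrightarrow> kap t > 0"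
    and k0: "kap \<longlonglongrightarrow> 0"
    and kdiv: "filterlim (\<lambda>n. \<Sum>t=1..n. kap t) at_top sequentially"
    and prange: "\<And>t. t \<ge> 1 \<Longrightarrow> pmin \<le> p t \<and> p t \<le> 1"
    and prec: "\<And>t. t \<ge> 1 \<Longrightarrow> p (Suc t) = p t + kap t * (g t + z t)"
    and Sconv: "convergent (\<lambda>n. \<Sum>t=1..n. kap t * z t)"
    and gge: "\<And>t. t \<ge> 1 \<Longrightarrow> g t \<ge> f (p t)"
    and geq: "\<And>t. t \<ge> 1 \<Longrightarrow> pmin + kap t * Mb < p t \<Longrightarrow> g t = f (p t)"
    and gbd: "\<And>t. t \<ge> 1 \<Longrightarrow> \<bar>g t\<bar> \<le> Mb"
    and fmono: "\<And>x y. x < y \<Longrightarrow> f y < f x"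
    and ps: "pmin \<le> ps" "f ps \<le> 0" "pmin < ps \<Longrightarrow> f ps = 0"
    and Mb: "Mb \<ge> 0"
  shows "p \<longlonglongrightarrow> ps"
proof -
  define S where "S = (\<lambda>n. \<Sum>t=1..n. kap t * z t)"
  obtain Sl where Sl: "S \<longlonglongrightarrow> Sl" using Sconv unfolding S_def convergent_def by blast
  define q where "q = (\<lambda>t. p t - S (t - 1) + Sl)"
  have "(\<lambda>n. S (Suc n - 1)) \<longlonglongrightarrow> Sl" using Sl by simp
  then have "(\<lambda>t. S (t - 1)) \<longlonglongrightarrow> Sl" by (rule LIMSEQ_imp_Suc)
  then have "(\<lambda>t. Sl - S (t - 1)) \<longlonglongrightarrow> Sl - Sl" by (intro tendsto_intros)
  then have qp: "(\<lambda>t. q t - p t) \<longlonglongrightarrow> 0" unfolding q_def by simp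
  have qrec: "q (Suc t) = q t + kap t * g t" if t1: "t \<ge> 1" for t
  proof -
    obtain m where m: "t = Suc m" using t1 by (metis Suc_le_D One_nat_def)
    have "S t = S (t - 1) + kap t * z t" unfolding S_def m by simp
    then show ?thesis unfolding q_def using prec[OF t1] by (simp add: algebra_simps)
  qed
  have up: "eventually (\<lambda>t. p t \<le> ps + 2 * \<eta>) sequentially" if eta: "\<eta> > 0" for \<eta>
  proof -
    have "f (ps + \<eta>) < f ps" using fmono eta by auto
    then have dpos: "- f (ps + \<eta>) > 0" using ps by auto
    have kB: "(\<lambda>t. kap t * Mb) \<longlonglongrightarrow> 0 * Mb" by (intro tendsto_intros k0)
    have "eventually (\<lambda>t. kap t * Mb < \<eta>) sequentially"
      using order_tendstoD(2)[OF kB, of \<eta>] eta by simp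
    then have gneg: "eventually (\<lambda>t. p t \<ge> ps + \<eta> \<longrightarrow> g t \<le> - (- f (ps + \<eta>))) sequentially"
      using eventually_ge_at_top[of 1]
    proof eventually_elim
      case (elim t)
      show ?case
      proof
        assume pt: "p t \<ge> ps + \<eta>"
        then have "g t = f (p t)" using geq[of t] elim ps by auto
        moreover have "f (p t) \<le> f (ps + \<eta>)" using pt fmono[of "ps + \<eta>" "p t"] by (cases "p t = ps + \<eta>") auto
        ultimately show "g t \<le> - (- f (ps + \<eta>))" by simp
      qed
    qed
    have A: "g t \<le> Mb" if "t \<ge> 1" for t using gbd[OF that] by simp
    have B: "pmin \<le> p t" if "t \<ge> 1" for t using prange[OF that] by simp
    have "eventually (\<lambda>t. p t \<le> ps + \<eta> + \<eta>) sequentially"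
      by (rule det_upper[OF dpos Mb eta kpos k0 kdiv qp qrec A gneg B])
    then show ?thesis by (simp add: algebra_simps)
  qed
  have low: "eventually (\<lambda>t. p t \<ge> ps - 2 * \<eta>) sequentially" if eta: "\<eta> > 0" for \<eta>
  proof (cases "ps = pmin")
    case True
    have "eventually (\<lambda>t. (t::nat) \<ge> 1) sequentially" by (rule eventually_ge_at_top)
    then show ?thesis
    proof (rule eventually_mono)
      fix t :: nat assume "t \<ge> 1"
      then show "p t \<ge> ps - 2 * \<eta>" using prange[of t] True eta by simp
    qed
  next
    case False
    then have f0: "f ps = 0" using ps by auto
    have "f ps < f (ps - \<eta>)" using fmono eta by auto
    then have dpos: "f (ps - \<eta>) > 0" using f0 by auto
    have qp': "(\<lambda>t. (- q t) - (- p t)) \<longlonglongrightarrow> 0" using tendsto_minus[OF qp] by simp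
    have qrec': "- q (Suc t) = - q t + kap t * (- g t)" if "t \<ge> 1" for t using qrec[OF that] by simp
    have gneg: "eventually (\<lambda>t. - p t \<ge> - (ps - \<eta>) \<longrightarrow> - g t \<le> - f (ps - \<eta>)) sequentially"
      using eventually_ge_at_top[of 1]
    proof eventually_elim
      case (elim t)
      show ?case
      proof
        assume pt: "- p t \<ge> - (ps - \<eta>)"
        have "f (p t) \<ge> f (ps - \<eta>)" using pt fmono[of "p t" "ps - \<eta>"] by (cases "p t = ps - \<eta>") auto
        then show "- g t \<le> - f (ps - \<eta>)" using gge[OF elim] by simp
      qed
    qed
    have A: "- g t \<le> Mb" if "t \<ge> 1" for t using gbd[OF that] by simp
    have B: "-1 \<le> - p t" if "t \<ge> 1" for t using prange[OF that] by simp
    have "eventually (\<lambda>t. - p t \<le> - (ps - \<eta>) + \<eta>) sequentially"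
      by (rule det_upper[OF dpos Mb eta kpos k0 kdiv qp' qrec' A gneg B])
    then show ?thesis by (auto elim!: eventually_mono)
  qed
  show ?thesis
  proof (rule order_tendstoI)
    fix a assume "a < ps"
    then show "eventually (\<lambda>t. a < p t) sequentially"
      using low[of "(ps - a)/3"] by (auto elim!: eventually_mono simp: field_simps)
  next
    fix a assume "a > ps"
    then show "eventually (\<lambda>t. p t < a) sequentially"
      using up[of "(a - ps)/3"] by (auto elim!: eventually_mono simp: field_simps)
  qed
qed




lemma br_exists:
  fixes \<alpha> \<beta> pmin :: real
  assumes a: "\<alpha> > 0" and b: "\<beta> \<ge> 0" and pm: "0 < pmin" "pmin < 1"
  shows "\<exists>ps. pmin \<le> ps \<and> ps \<le> 1 \<and> exp (- \<alpha> * ps) - ps * \<beta> - ps \<le> 0 \<and>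
     (pmin < ps \<longrightarrow> exp (- \<alpha> * ps) - ps * \<beta> - ps = 0)"
proof (cases "exp (- \<alpha> * pmin) - pmin * \<beta> - pmin \<le> 0")
  case True then show ?thesis using pm by (intro exI[of _ pmin]) auto
next
  case False
  have e: "exp (- \<alpha>) < 1" using a by simp
  have "exp (- \<alpha> * 1) - 1 * \<beta> - 1 = exp (- \<alpha>) - \<beta> - 1" by simp
  then have f1: "exp (- \<alpha> * 1) - 1 * \<beta> - 1 \<le> 0" using b e by linarith
  have "\<exists>x\<ge>pmin. x \<le> 1 \<and> exp (- \<alpha> * x) - x * \<beta> - x = 0"
    by (rule IVT2[of "\<lambda>x. exp (- \<alpha> * x) - x * \<beta> - x"]) (use f1 False pm in \<open>auto intro!: continuous_intros\<close>)
  then show ?thesis by force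
qed

lemma br_unique:
  fixes \<alpha> \<beta> pmin ps C :: real
  assumes a: "\<alpha> > 0" and b: "\<beta> \<ge> 0"
    and ps: "pmin \<le> ps" "ps \<le> 1" "exp (- \<alpha> * ps) - ps * \<beta> - ps \<le> 0"
       "pmin < ps \<Longrightarrow> exp (- \<alpha> * ps) - ps * \<beta> - ps = 0"
    and q: "pmin \<le> q" "q \<le> 1" "q \<noteq> ps"
  shows "- exp (- \<alpha> * q) / \<alpha> - q\<^sup>2 / 2 * (1 + \<beta>) + C < - exp (- \<alpha> * ps) / \<alpha> - ps\<^sup>2 / 2 * (1 + \<beta>) + C"
proof -
  define U where "U = (\<lambda>x::real. - exp (- \<alpha> * x) / \<alpha> - x\<^sup>2 / 2 * (1 + \<beta>) + C)"
  define f where "f = (\<lambda>x::real. exp (- \<alpha> * x) - x * \<beta> - x)"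
  have D: "DERIV U x :> f x" for x
    unfolding U_def f_def
    using a by (auto intro!: derivative_eq_intros simp: field_simps power2_eq_square)
  have fm: "f y < f x" if "x < y" for x y
  proof -
    have "exp (- \<alpha> * y) < exp (- \<alpha> * x)" using a that by simp
    moreover have "x * \<beta> \<le> y * \<beta>" using b that by (intro mult_right_mono) auto
    ultimately show ?thesis unfolding f_def using that by linarith
  qed
  show ?thesis
  proof (cases "q > ps")
    case True
    obtain z where z: "ps < z" "z < q" "U q - U ps = (q - ps) * f z"
      using MVT2[OF True, of U f] D by blast
    have "f z < 0" using fm[OF z(1)] ps(3) unfolding f_def by simp
    then have "(q - ps) * f z < 0" using True by (simp add: mult_pos_neg)
    then show ?thesis using z(3) unfolding U_def by simp
  next
    case False
    then have qp: "q < ps" using q by simp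
    then have "f ps = 0" using ps q unfolding f_def by simp
    obtain z where z: "q < z" "z < ps" "U ps - U q = (ps - q) * f z"
      using MVT2[OF qp, of U f] D by blast
    have "f z > 0" using fm[OF z(2)] \<open>f ps = 0\<close> by simp
    then have "(ps - q) * f z > 0" using qp by simp
    then show ?thesis using z(3) unfolding U_def by simp
  qed
qed




definition psum :: "(nat \<Rightarrow> 'a \<Rightarrow> real) \<Rightarrow> nat \<Rightarrow> 'a \<Rightarrow> real" where
  "psum Z n x = (\<Sum>t<n. Z t x)"

lemma pred_lt: fixes g :: "'b \<Rightarrow> real" assumes "g \<in> borel_measurable N"
  shows "Measurable.pred N (\<lambda>x. g x < c)" "Measurable.pred N (\<lambda>x. c \<le> g x)"
  using assms by (simp_all add: pred_def)

locale mart_setting = prob_space M for M :: "'a measure" +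
  fixes F :: "nat \<Rightarrow> 'a measure" and Z :: "nat \<Rightarrow> 'a \<Rightarrow> real" and b :: "nat \<Rightarrow> real"
  assumes Fsub: "\<And>t. subalgebra M (F t)"
    and Fmono: "\<And>t s. t \<le> s \<Longrightarrow> sets (F t) \<subseteq> sets (F s)"
    and Zmeas: "\<And>t. Z t \<in> borel_measurable (F (Suc t))"
    and Zb: "\<And>t x. x \<in> space M \<Longrightarrow> \<bar>Z t x\<bar> \<le> b t"
    and orth: "\<And>t H K. H \<in> borel_measurable (F t) \<Longrightarrow> (\<And>x. x \<in> space M \<Longrightarrow> \<bar>H x\<bar> \<le> K)
                 \<Longrightarrow> (\<integral>x. H x * Z t x \<partial>M) = 0"
begin

lemma Fmeas_mono: "f \<in> borel_measurable (F t) \<Longrightarrow> t \<le> s \<Longrightarrow> f \<in> borel_measurable (F s)"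
  by (rule measurable_from_subalg[of "F s" "F t"])
     (use Fsub Fmono in \<open>auto simp: subalgebra_def\<close>)

lemma Fmeas_M: "f \<in> borel_measurable (F t) \<Longrightarrow> f \<in> borel_measurable M"
  by (rule measurable_from_subalg[OF Fsub])

lemma Fsets_M: "A \<in> sets (F t) \<Longrightarrow> A \<in> sets M"
  using Fsub by (auto simp: subalgebra_def)

lemma Zmeas_M[measurable]: "Z t \<in> borel_measurable M"
  by (rule Fmeas_M[OF Zmeas])

lemma S_Fmeas: "psum Z n \<in> borel_measurable (F n)"
  unfolding psum_def
  by (rule borel_measurable_sum, rule Fmeas_mono[OF Zmeas]) auto

lemma S_meas[measurable]: "psum Z n \<in> borel_measurable M"
  by (rule Fmeas_M[OF S_Fmeas])

lemma S_bound: "x \<in> space M \<Longrightarrow> \<bar>psum Z n x\<bar> \<le> (\<Sum>t<n. b t)"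
  unfolding psum_def
  by (rule order_trans[OF sum_abs], rule sum_mono) (use Zb in auto)

lemma bdd_int: fixes f :: "'a \<Rightarrow> real" and B :: real shows "f \<in> borel_measurable M \<Longrightarrow> (\<And>x. x \<in> space M \<Longrightarrow> \<bar>f x\<bar> \<le> B) \<Longrightarrow> integrable M f"
  by (rule integrable_const_bound[where B=B]) auto

lemma step_id:
  assumes A: "A \<in> sets (F j)" and mj: "m \<le> j"
  shows "(\<integral>x. (psum Z (Suc j) x - psum Z m x)\<^sup>2 * indicator A x \<partial>M) =
         (\<integral>x. (psum Z j x - psum Z m x)\<^sup>2 * indicator A x \<partial>M) + (\<integral>x. (Z j x)\<^sup>2 * indicator A x \<partial>M)"
proof -
  have AM[measurable]: "A \<in> sets M" by (rule Fsets_M[OF A])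
  define H where "H = (\<lambda>x. (psum Z j x - psum Z m x) * indicator A x)"
  have HF: "H \<in> borel_measurable (F j)"
    unfolding H_def using S_Fmeas[of j] Fmeas_mono[OF S_Fmeas[of m] mj] A
    by (intro borel_measurable_times borel_measurable_diff borel_measurable_indicator) auto
  define K where "K = (\<Sum>t<j. b t) + (\<Sum>t<m. b t)"
  have HK: "\<bar>H x\<bar> \<le> K" if "x \<in> space M" for x
  proof -
    have "\<bar>psum Z j x - psum Z m x\<bar> \<le> K" using S_bound[OF that, of j] S_bound[OF that, of m] unfolding K_def by linarith
    moreover have "\<bar>indicator A x :: real\<bar> \<le> 1" by (simp add: indicator_def)
    ultimately have "\<bar>psum Z j x - psum Z m x\<bar> * \<bar>indicator A x :: real\<bar> \<le> K * 1"
      by (intro mult_mono) auto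
    then show ?thesis unfolding H_def by (simp add: abs_mult)
  qed
  have o: "(\<integral>x. H x * Z j x \<partial>M) = 0" by (rule orth[OF HF HK])
  have eq: "(psum Z (Suc j) x - psum Z m x)\<^sup>2 * indicator A x =
        (psum Z j x - psum Z m x)\<^sup>2 * indicator A x + 2 * (H x * Z j x) + (Z j x)\<^sup>2 * indicator A x" for x
    unfolding H_def psum_def by (simp add: power2_eq_square algebra_simps indicator_def)
  have DK: "\<bar>psum Z j x - psum Z m x\<bar> \<le> K" if "x \<in> space M" for x
    using S_bound[OF that, of j] S_bound[OF that, of m] unfolding K_def by linarith
  have Zj: "\<bar>Z j x\<bar> \<le> b j" if "x \<in> space M" for x using Zb[OF that] .
  have sq: "\<bar>y\<^sup>2 * indicator A x\<bar> \<le> L\<^sup>2" if "\<bar>y\<bar> \<le> L" for y L :: real and x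
  proof -
    have "y\<^sup>2 \<le> L\<^sup>2" using that by (metis abs_le_square_iff abs_ge_zero order.trans abs_of_nonneg)
    then show ?thesis by (auto simp: indicator_def)
  qed
  have i1: "integrable M (\<lambda>x. (psum Z j x - psum Z m x)\<^sup>2 * indicator A x)"
    by (rule bdd_int[where B="K\<^sup>2"]) (use sq[OF DK] in auto)
  have i2: "integrable M (\<lambda>x. 2 * (H x * Z j x))"
  proof (rule bdd_int[where B="2 * (K * b j)"])
    show "(\<lambda>x. 2 * (H x * Z j x)) \<in> borel_measurable M" using Fmeas_M[OF HF] by measurable
    fix x assume x: "x \<in> space M"
    have "\<bar>H x\<bar> * \<bar>Z j x\<bar> \<le> K * b j" using HK[OF x] Zj[OF x] by (intro mult_mono) auto
    then show "\<bar>2 * (H x * Z j x)\<bar> \<le> 2 * (K * b j)" by (simp add: abs_mult)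
  qed
  have i3: "integrable M (\<lambda>x. (Z j x)\<^sup>2 * indicator A x)"
    by (rule bdd_int[where B="(b j)\<^sup>2"]) (use sq[OF Zj] in auto)
  have "(\<integral>x. (psum Z (Suc j) x - psum Z m x)\<^sup>2 * indicator A x \<partial>M) =
     (\<integral>x. (psum Z j x - psum Z m x)\<^sup>2 * indicator A x + 2 * (H x * Z j x) + (Z j x)\<^sup>2 * indicator A x \<partial>M)"
    by (simp only: eq)
  also have "\<dots> = (\<integral>x. (psum Z j x - psum Z m x)\<^sup>2 * indicator A x \<partial>M) + (\<integral>x. 2 * (H x * Z j x) \<partial>M)
      + (\<integral>x. (Z j x)\<^sup>2 * indicator A x \<partial>M)"
    using i1 i2 i3 by simp
  also have "(\<integral>x. 2 * (H x * Z j x) \<partial>M) = 0" using o by simp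
  finally show ?thesis by simp
qed

lemma sq_bound: "\<bar>y\<^sup>2 * indicator A x\<bar> \<le> L\<^sup>2" if "\<bar>y\<bar> \<le> L" for y L :: real and A and x :: 'a
proof -
  have "y\<^sup>2 \<le> L\<^sup>2" using that by (metis abs_le_square_iff abs_ge_zero order.trans abs_of_nonneg)
  then show ?thesis by (auto simp: indicator_def)
qed

lemma intD: assumes [measurable]: "A \<in> sets M"
  shows "integrable M (\<lambda>x. (psum Z j x - psum Z m x)\<^sup>2 * indicator A x)"
proof (rule bdd_int[where B="((\<Sum>t<j. b t) + (\<Sum>t<m. b t))\<^sup>2"])
  fix x assume x: "x \<in> space M"
  have "\<bar>psum Z j x - psum Z m x\<bar> \<le> (\<Sum>t<j. b t) + (\<Sum>t<m. b t)"
    using S_bound[OF x, of j] S_bound[OF x, of m] by linarith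
  then show "\<bar>(psum Z j x - psum Z m x)\<^sup>2 * indicator A x\<bar> \<le> ((\<Sum>t<j. b t) + (\<Sum>t<m. b t))\<^sup>2"
    by (rule sq_bound)
qed measurable

lemma intZ: assumes [measurable]: "A \<in> sets M"
  shows "integrable M (\<lambda>x. (Z j x)\<^sup>2 * indicator A x)"
  by (rule bdd_int[where B="(b j)\<^sup>2"]) (use sq_bound[OF Zb] in auto)

lemma mono_ge:
  assumes A: "A \<in> sets (F k)" and mk: "m \<le> k" and kn: "k \<le> n"
  shows "(\<integral>x. (psum Z k x - psum Z m x)\<^sup>2 * indicator A x \<partial>M) \<le> (\<integral>x. (psum Z n x - psum Z m x)\<^sup>2 * indicator A x \<partial>M)"
  using kn
proof (induction n rule: dec_induct)
  case base then show ?case by simp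
next
  case (step n)
  have An: "A \<in> sets (F n)" using Fmono[OF step(1)] A by auto
  have nn: "0 \<le> (\<integral>x. (Z n x)\<^sup>2 * indicator A x \<partial>M)" by (intro Bochner_Integration.integral_nonneg) (simp add: indicator_def)
  have "m \<le> n" using step mk by simp
  then show ?case using step_id[OF An, of m] step.IH nn by linarith
qed

lemma var_bound:
  assumes mn: "m \<le> n"
  shows "(\<integral>x. (psum Z n x - psum Z m x)\<^sup>2 \<partial>M) \<le> (\<Sum>t\<in>{m..<n}. (b t)\<^sup>2)"
proof -
  have sp: "space M \<in> sets (F j)" for j using Fsub[of j] by (metis sets.top subalgebra_def)
  have "(\<integral>x. (psum Z n x - psum Z m x)\<^sup>2 * indicator (space M) x \<partial>M) \<le> (\<Sum>t\<in>{m..<n}. (b t)\<^sup>2)"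
    using mn
  proof (induction n rule: dec_induct)
    case base then show ?case by simp
  next
    case (step n)
    have "(\<integral>x. (Z n x)\<^sup>2 * indicator (space M) x \<partial>M) \<le> (\<integral>x. (b n)\<^sup>2 \<partial>M)"
    proof (rule integral_mono)
      show "integrable M (\<lambda>x. (Z n x)\<^sup>2 * indicator (space M) x)" by (rule intZ) auto
      fix x assume x: "x \<in> space M"
      show "(Z n x)\<^sup>2 * indicator (space M) x \<le> (b n)\<^sup>2"
        using sq_bound[OF Zb[of x n, OF x], of "space M" x] by simp
    qed auto
    also have "\<dots> = (b n)\<^sup>2" by (simp add: prob_space)
    finally show ?case using step_id[OF sp step(1)] step by simp
  qed
  moreover have "(\<integral>x. (psum Z n x - psum Z m x)\<^sup>2 * indicator (space M) x \<partial>M) = (\<integral>x. (psum Z n x - psum Z m x)\<^sup>2 \<partial>M)"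
    by (rule Bochner_Integration.integral_cong) auto
  ultimately show ?thesis by simp
qed


lemma kolm:
  assumes e: "\<epsilon> > 0" and mn: "m \<le> n"
  shows "measure M {x\<in>space M. \<exists>k\<in>{m..n}. \<epsilon> \<le> \<bar>psum Z k x - psum Z m x\<bar>} * \<epsilon>\<^sup>2 \<le> (\<Sum>t\<in>{m..<n}. (b t)\<^sup>2)"
proof -
  define D where "D = (\<lambda>k x. \<bar>psum Z k x - psum Z m x\<bar>)"
  define E where "E = {x\<in>space M. \<exists>k\<in>{m..n}. \<epsilon> \<le> D k x}"
  define A where "A = (\<lambda>k. {x\<in>space M. \<epsilon> \<le> D k x \<and> (\<forall>j\<in>{m..<k}. D j x < \<epsilon>)})"
  have DF: "D j \<in> borel_measurable (F k)" if "j \<le> k" "m \<le> k" for j k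
    unfolding D_def using Fmeas_mono[OF S_Fmeas that(1)] Fmeas_mono[OF S_Fmeas that(2)] by measurable
  have AF: "A k \<in> sets (F k)" if "m \<le> k" for k
  proof -
    have "Measurable.pred (F k) (\<lambda>x. \<epsilon> \<le> D k x \<and> (\<forall>j\<in>{m..<k}. D j x < \<epsilon>))"
      by (intro pred_intros_logic pred_intros_countable_bounded(3) pred_lt DF) (use that in auto)
    moreover have "space (F k) = space M" using Fsub[of k] by (simp add: subalgebra_def)
    ultimately show ?thesis unfolding A_def pred_def by simp
  qed
  have AM: "A k \<in> sets M" if "m \<le> k" for k using Fsets_M[OF AF[OF that]] .
  have DM: "D k \<in> borel_measurable M" for k by (rule Fmeas_M[OF DF[of k "max k m"]]) auto
  have "Measurable.pred M (\<lambda>x. \<exists>k\<in>{m..n}. \<epsilon> \<le> D k x)"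
    by (intro pred_intros_countable_bounded(4) pred_lt DM)
  then have EM: "E \<in> sets M" unfolding E_def pred_def .
  have ind: "indicator E x = (\<Sum>k\<in>{m..n}. indicator (A k) x :: real)" if x: "x \<in> space M" for x
  proof (cases "x \<in> E")
    case False
    then have "x \<notin> A k" if "k \<in> {m..n}" for k using that unfolding A_def E_def by auto
    then show ?thesis using False by simp
  next
    case True
    define k0 where "k0 = (LEAST k. m \<le> k \<and> k \<le> n \<and> \<epsilon> \<le> D k x)"
    have ex: "\<exists>k. m \<le> k \<and> k \<le> n \<and> \<epsilon> \<le> D k x" using True unfolding E_def by auto
    have k0: "m \<le> k0 \<and> k0 \<le> n \<and> \<epsilon> \<le> D k0 x" unfolding k0_def by (rule LeastI_ex[OF ex])
    have k0l: "\<not> (m \<le> j \<and> j \<le> n \<and> \<epsilon> \<le> D j x)" if "j < k0" for j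
      using not_less_Least[of j "\<lambda>k. m \<le> k \<and> k \<le> n \<and> \<epsilon> \<le> D k x"] that unfolding k0_def by blast
    have iff: "x \<in> A k \<longleftrightarrow> k = k0" if k: "k \<in> {m..n}" for k
    proof
      assume xA: "x \<in> A k"
      have "\<not> k < k0" using k0l[of k] xA k unfolding A_def by auto
      moreover have "\<not> k0 < k"
      proof
        assume "k0 < k"
        then have "D k0 x < \<epsilon>" using xA k0 unfolding A_def by auto
        then show False using k0 by simp
      qed
      ultimately show "k = k0" by simp
    next
      assume "k = k0"
      then show "x \<in> A k" using k0 k0l x unfolding A_def by force
    qed
    have "(\<Sum>k\<in>{m..n}. indicator (A k) x :: real) = (\<Sum>k\<in>{m..n}. if k = k0 then 1 else 0)"
      by (rule sum.cong) (auto simp: indicator_def iff)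
    also have "\<dots> = 1" using k0 by simp
    finally show ?thesis using True by simp
  qed
  let ?Q = "\<lambda>k x. (psum Z k x - psum Z m x)\<^sup>2"
  have Esp: "E \<inter> space M = E" unfolding E_def by auto
  have "measure M E * \<epsilon>\<^sup>2 = (\<integral>x. \<epsilon>\<^sup>2 * indicator E x \<partial>M)" using Esp by simp
  also have "\<dots> = (\<integral>x. (\<Sum>k\<in>{m..n}. \<epsilon>\<^sup>2 * indicator (A k) x) \<partial>M)"
    by (rule Bochner_Integration.integral_cong) (auto simp: ind sum_distrib_left)
  also have "\<dots> = (\<Sum>k\<in>{m..n}. (\<integral>x. \<epsilon>\<^sup>2 * indicator (A k) x \<partial>M))"
    by (rule Bochner_Integration.integral_sum) (auto intro!: integrable_real_indicator AM simp: less_top[symmetric])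
  also have "\<dots> \<le> (\<Sum>k\<in>{m..n}. (\<integral>x. ?Q n x * indicator (A k) x \<partial>M))"
  proof (rule sum_mono)
    fix k assume k: "k \<in> {m..n}"
    have "(\<integral>x. \<epsilon>\<^sup>2 * indicator (A k) x \<partial>M) \<le> (\<integral>x. ?Q k x * indicator (A k) x \<partial>M)"
    proof (rule integral_mono)
      show "integrable M (\<lambda>x. \<epsilon>\<^sup>2 * indicator (A k) x)" using k by (auto intro!: integrable_real_indicator AM simp: less_top[symmetric])
      show "integrable M (\<lambda>x. ?Q k x * indicator (A k) x)" using k by (auto intro!: intD AM)
      fix x assume "x \<in> space M"
      show "\<epsilon>\<^sup>2 * indicator (A k) x \<le> ?Q k x * indicator (A k) x"
      proof (cases "x \<in> A k")
        case True
        then have "\<epsilon> \<le> \<bar>psum Z k x - psum Z m x\<bar>" unfolding A_def D_def by auto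
        then have "\<epsilon>\<^sup>2 \<le> \<bar>psum Z k x - psum Z m x\<bar>\<^sup>2" using e by (intro power_mono) auto
        then show ?thesis using True by simp
      qed simp
    qed
    also have "\<dots> \<le> (\<integral>x. ?Q n x * indicator (A k) x \<partial>M)"
      by (rule mono_ge[OF AF]) (use k in auto)
    finally show "(\<integral>x. \<epsilon>\<^sup>2 * indicator (A k) x \<partial>M) \<le> (\<integral>x. ?Q n x * indicator (A k) x \<partial>M)" .
  qed
  also have "\<dots> = (\<integral>x. (\<Sum>k\<in>{m..n}. ?Q n x * indicator (A k) x) \<partial>M)"
    by (rule Bochner_Integration.integral_sum[symmetric]) (auto intro!: intD AM)
  also have "\<dots> = (\<integral>x. ?Q n x * indicator E x \<partial>M)"
    by (rule Bochner_Integration.integral_cong) (auto simp: ind sum_distrib_left)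
  also have "\<dots> \<le> (\<integral>x. ?Q n x \<partial>M)"
  proof (rule integral_mono)
    show "integrable M (\<lambda>x. ?Q n x * indicator E x)" by (intro intD EM)
    have "integrable M (\<lambda>x. ?Q n x * indicator (space M) x)" by (intro intD) auto
    moreover have "integrable M (\<lambda>x. ?Q n x * indicator (space M) x) = integrable M (\<lambda>x. ?Q n x)"
      by (rule Bochner_Integration.integrable_cong) auto
    ultimately show "integrable M (\<lambda>x. ?Q n x)" by simp
  qed (auto simp: indicator_def)
  also have "\<dots> \<le> (\<Sum>t\<in>{m..<n}. (b t)\<^sup>2)" by (rule var_bound[OF mn])
  finally show ?thesis unfolding E_def D_def .
qed

lemma tail_bound:
  assumes e: "\<epsilon> > 0" and sb: "summable (\<lambda>t. (b t)\<^sup>2)"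
  shows "measure M {x\<in>space M. \<exists>k\<in>{m..}. \<epsilon> \<le> \<bar>psum Z k x - psum Z m x\<bar>} * \<epsilon>\<^sup>2
          \<le> (\<Sum>t. (b t)\<^sup>2) - (\<Sum>t<m. (b t)\<^sup>2)"
proof -
  define T where "T = (\<Sum>t. (b t)\<^sup>2) - (\<Sum>t<m. (b t)\<^sup>2)"
  define En where "En = (\<lambda>n. {x\<in>space M. \<exists>k\<in>{m..m+n}. \<epsilon> \<le> \<bar>psum Z k x - psum Z m x\<bar>})"
  have DM: "(\<lambda>x. \<bar>psum Z k x - psum Z m x\<bar>) \<in> borel_measurable M" for k by measurable
  have EnM: "En n \<in> sets M" for n
  proof -
    have "Measurable.pred M (\<lambda>x. \<exists>k\<in>{m..m+n}. \<epsilon> \<le> \<bar>psum Z k x - psum Z m x\<bar>)"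
      by (intro pred_intros_countable_bounded(4) pred_lt DM)
    then show ?thesis unfolding En_def pred_def .
  qed
  have inc: "incseq En" unfolding incseq_def En_def by (auto 4 3)
  have bnd: "measure M (En n) \<le> T / \<epsilon>\<^sup>2" for n
  proof -
    have "measure M (En n) * \<epsilon>\<^sup>2 \<le> (\<Sum>t\<in>{m..<m+n}. (b t)\<^sup>2)"
      unfolding En_def by (rule kolm[OF e]) simp
    also have "\<dots> \<le> T"
    proof -
      have "(\<Sum>t<m+n. (b t)\<^sup>2) = (\<Sum>t<m. (b t)\<^sup>2) + (\<Sum>t\<in>{m..<m+n}. (b t)\<^sup>2)"
        by (metis add.commute le_add1 sum.atLeastLessThan_concat lessThan_atLeast0 zero_le)
      moreover have "(\<Sum>t<m+n. (b t)\<^sup>2) \<le> (\<Sum>t. (b t)\<^sup>2)"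
        by (rule sum_le_suminf[OF sb]) auto
      ultimately show ?thesis unfolding T_def by linarith
    qed
    finally show ?thesis using e by (simp add: field_simps)
  qed
  have "(\<lambda>n. measure M (En n)) \<longlonglongrightarrow> measure M (\<Union>n. En n)"
    by (rule finite_Lim_measure_incseq) (use EnM inc in auto)
  then have "measure M (\<Union>n. En n) \<le> T / \<epsilon>\<^sup>2" by (rule LIMSEQ_le_const2) (use bnd in auto)
  moreover have "(\<Union>n. En n) = {x\<in>space M. \<exists>k\<in>{m..}. \<epsilon> \<le> \<bar>psum Z k x - psum Z m x\<bar>}"
  proof
    show "(\<Union>n. En n) \<subseteq> {x\<in>space M. \<exists>k\<in>{m..}. \<epsilon> \<le> \<bar>psum Z k x - psum Z m x\<bar>}"
      by (auto simp: En_def)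
    show "{x\<in>space M. \<exists>k\<in>{m..}. \<epsilon> \<le> \<bar>psum Z k x - psum Z m x\<bar>} \<subseteq> (\<Union>n. En n)"
    proof
      fix x assume "x \<in> {x\<in>space M. \<exists>k\<in>{m..}. \<epsilon> \<le> \<bar>psum Z k x - psum Z m x\<bar>}"
      then obtain k where k: "x \<in> space M" "k \<ge> m" "\<epsilon> \<le> \<bar>psum Z k x - psum Z m x\<bar>" by auto
      then have "x \<in> En (k - m)" unfolding En_def by (intro CollectI conjI bexI[of _ k]) auto
      then show "x \<in> (\<Union>n. En n)" by auto
    qed
  qed
  ultimately show ?thesis using e unfolding T_def by (simp add: field_simps)
qed

lemma mart_conv:
  assumes sb: "summable (\<lambda>t. (b t)\<^sup>2)"
  shows "AE x in M. convergent (\<lambda>n. psum Z n x)"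
proof -
  define T where "T = (\<lambda>m. (\<Sum>t. (b t)\<^sup>2) - (\<Sum>t<m. (b t)\<^sup>2))"
  have T0: "T \<longlonglongrightarrow> 0"
  proof -
    have "(\<lambda>m. (\<Sum>t. (b t)\<^sup>2) - (\<Sum>t<m. (b t)\<^sup>2)) \<longlonglongrightarrow> (\<Sum>t. (b t)\<^sup>2) - (\<Sum>t. (b t)\<^sup>2)"
      by (intro tendsto_intros summable_LIMSEQ sb)
    then show ?thesis unfolding T_def by simp
  qed
  define C where "C = (\<lambda>j::nat. {x\<in>space M. \<forall>m. \<exists>k\<in>{m..}. 1 / real (Suc j) \<le> \<bar>psum Z k x - psum Z m x\<bar>})"
  have DM: "(\<lambda>x. \<bar>psum Z k x - psum Z m x\<bar>) \<in> borel_measurable M" for k m by measurable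
  have CM: "C j \<in> sets M" for j
  proof -
    have "Measurable.pred M (\<lambda>x. \<forall>m. \<exists>k\<in>{m..}. 1 / real (Suc j) \<le> \<bar>psum Z k x - psum Z m x\<bar>)"
      by (intro pred_intros_countable pred_intros_countable_bounded(4) pred_lt DM)
    then show ?thesis unfolding C_def pred_def .
  qed
  have C0: "measure M (C j) = 0" for j
  proof -
    define e where "e = 1 / real (Suc j)"
    have e: "e > 0" unfolding e_def by simp
    have le: "measure M (C j) \<le> T m / e\<^sup>2" for m
    proof -
      have sub: "C j \<subseteq> {x\<in>space M. \<exists>k\<in>{m..}. e \<le> \<bar>psum Z k x - psum Z m x\<bar>}"
        unfolding C_def e_def by auto
      have "Measurable.pred M (\<lambda>x. \<exists>k\<in>{m..}. e \<le> \<bar>psum Z k x - psum Z m x\<bar>)"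
        by (intro pred_intros_countable_bounded(4) pred_lt DM)
      then have "measure M (C j) \<le> measure M {x\<in>space M. \<exists>k\<in>{m..}. e \<le> \<bar>psum Z k x - psum Z m x\<bar>}"
        using sub by (intro finite_measure_mono) (auto simp: pred_def)
      also have "\<dots> \<le> T m / e\<^sup>2"
        using tail_bound[OF e sb, of m] e unfolding T_def by (simp add: field_simps)
      finally show ?thesis .
    qed
    have "(\<lambda>m. T m / e\<^sup>2) \<longlonglongrightarrow> 0 / e\<^sup>2" by (intro tendsto_intros T0) (use e in auto)
    then have "measure M (C j) \<le> 0" using le by (intro LIMSEQ_le_const) auto
    then show ?thesis by (simp add: measure_le_0_iff)
  qed
  have "AE x in M. x \<notin> C j" for j
    using AE_iff_null_sets[OF CM[of j]] C0[of j] CM[of j]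
    by (simp add: null_sets_def emeasure_eq_measure)
  then have "AE x in M. \<forall>j. x \<notin> C j" by (simp add: AE_all_countable)
  then have "AE x in M. x \<in> space M \<and> (\<forall>j. x \<notin> C j)" using AE_space by eventually_elim auto
  then show ?thesis
  proof (rule eventually_mono)
    fix x assume xx: "x \<in> space M \<and> (\<forall>j. x \<notin> C j)"
    then have x: "x \<in> space M" and nC: "\<forall>j. x \<notin> C j" by auto
    have good: "\<exists>m. \<forall>k\<ge>m. \<bar>psum Z k x - psum Z m x\<bar> < 1 / real (Suc j)" for j
      using nC[rule_format, of j] x unfolding C_def by (auto simp: not_le)
    have "Cauchy (\<lambda>n. psum Z n x)"
    proof (rule CauchyI)
      fix e :: real assume e: "e > 0"
      obtain j where j: "inverse (real (Suc j)) < e / 2" using reals_Archimedean[of "e/2"] e by auto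
      obtain m where m: "\<And>k. k \<ge> m \<Longrightarrow> \<bar>psum Z k x - psum Z m x\<bar> < 1 / real (Suc j)" using good[of j] by auto
      show "\<exists>M. \<forall>m'\<ge>M. \<forall>n\<ge>M. norm (psum Z m' x - psum Z n x) < e"
      proof (intro exI allI impI)
        fix m' n assume "m' \<ge> m" "n \<ge> m"
        then have "\<bar>psum Z m' x - psum Z m x\<bar> < 1 / real (Suc j)" "\<bar>psum Z n x - psum Z m x\<bar> < 1 / real (Suc j)"
          using m by auto
        then show "norm (psum Z m' x - psum Z n x) < e" using j by (simp add: inverse_eq_divide)
      qed
    qed
    then show "convergent (\<lambda>n. psum Z n x)" by (simp add: Cauchy_convergent_iff)
  qed
qed

end



lemma hist_space: "space (hist_alg M p t) = space M"
  unfolding hist_alg_def by (rule space_measure_of) auto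

lemma hist_sets: "sets (hist_alg M p t) = sigma_sets (space M) (\<Union>s\<in>{1..t}. {p s -` B \<inter> space M | B. B \<in> sets borel})"
  unfolding hist_alg_def by (rule sets_measure_of) auto

lemma hist_mono: "t \<le> t' \<Longrightarrow> sets (hist_alg M p t) \<subseteq> sets (hist_alg M p t')"
  unfolding hist_sets by (rule sigma_sets_mono', rule UN_mono) auto

lemma hist_sub:
  assumes "\<And>s. 1 \<le> s \<Longrightarrow> s \<le> t \<Longrightarrow> p s \<in> borel_measurable M"
  shows "subalgebra M (hist_alg M p t)"
  unfolding subalgebra_def hist_space
proof (simp, unfold hist_sets, rule sets.sigma_sets_subset)
  show "(\<Union>s\<in>{1..t}. {p s -` B \<inter> space M | B. B \<in> sets borel}) \<subseteq> sets M"
    using assms by (auto intro: measurable_sets)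
qed

lemma hist_meas:
  assumes "1 \<le> s" "s \<le> t"
  shows "p s \<in> borel_measurable (hist_alg M p t)"
proof (rule measurableI)
  fix A :: "real set" assume "A \<in> sets borel"
  have "p s -` A \<inter> space M \<in> (\<Union>s\<in>{1..t}. {p s -` B \<inter> space M | B. B \<in> sets borel})"
  proof (rule UN_I)
    show "s \<in> {1..t}" using assms by auto
    show "p s -` A \<inter> space M \<in> {p s -` B \<inter> space M | B. B \<in> sets borel}" using \<open>A \<in> sets borel\<close> by blast
  qed
  then show "p s -` A \<inter> space (hist_alg M p t) \<in> sets (hist_alg M p t)"
    unfolding hist_sets hist_space by (rule sigma_sets.Basic)
qed simp





lemma sum_shift1: "(\<Sum>t<n. h (Suc t)) = (\<Sum>t=1..n. h t)" for h :: "nat \<Rightarrow> real"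
  by (induction n) auto

theorem theorem6:
  fixes M :: "'a measure"
    and N l :: nat
    and P :: "nat \<Rightarrow> real"
    and c rho1 rho2 pmin Mb :: real
    and p v :: "nat \<Rightarrow> 'a \<Rightarrow> real"
    and kappa :: "nat \<Rightarrow> real"
  assumes "prob_space M"
    and "l \<in> {1..N}"
    and "c > 0" and "rho1 > 0" and "rho2 > 0"
    and "pmin > 0" and "pmin < 1"
    and "\<And>k. k \<in> {1..N} - {l} \<Longrightarrow> P k \<in> {0..1}"
    and "p 1 \<in> borel_measurable M"
    and "\<And>x. x \<in> space M \<Longrightarrow> p 1 x \<in> {pmin..1}"
    and "\<And>t. t \<ge> 1 \<Longrightarrow> v t \<in> borel_measurable M"
    and "\<And>t x. t \<ge> 1 \<Longrightarrow> x \<in> space M \<Longrightarrow>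
           p (Suc t) x = max pmin (p t x + kappa t * v t x)"
    and "\<And>t x. t \<ge> 1 \<Longrightarrow> x \<in> space M \<Longrightarrow> \<bar>v t x\<bar> \<le> Mb"
    and "\<And>t x. t \<ge> 1 \<Longrightarrow> x \<in> space M \<Longrightarrow> v t x \<le> 1 - p t x"
    and "\<And>t. t \<ge> 1 \<Longrightarrow>
           AE x in M. real_cond_exp M (hist_alg M p t) (v t) x =
             exp (- (c * rho1) * p t x) - p t x * beta_coef rho2 N l P - p t x"
    and "\<And>t. t \<ge> 1 \<Longrightarrow> kappa t \<in> {0<..1}"
    and "filterlim (\<lambda>n. \<Sum>t=1..n. kappa t) at_top sequentially"
    and "summable (\<lambda>t. (kappa t)\<^sup>2)"
  shows "AE x in M. (\<lambda>t. p t x) \<longlonglongrightarrow> best_response c rho1 rho2 pmin N l P"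
proof -
  note A = assms
  interpret PS: prob_space M by (rule A(1))
  define \<alpha> where "\<alpha> = c * rho1"
  define \<beta> where "\<beta> = beta_coef rho2 N l P"
  define f where "f = (\<lambda>x::real. exp (- \<alpha> * x) - x * \<beta> - x)"
  have apos: "\<alpha> > 0" unfolding \<alpha>_def using A(3,4) by simp
  have bnn: "\<beta> \<ge> 0" unfolding \<beta>_def beta_coef_def
    using A(8) by (intro mult_nonneg_nonneg prod_nonneg) auto
  have kpos: "kappa t > 0" "kappa t \<le> 1" if "t \<ge> 1" for t using A(16)[OF that] by auto
  have Mb0: "Mb \<ge> 0"
  proof -
    obtain x where "x \<in> space M" using PS.not_empty by auto
    then show ?thesis using A(13)[of 1 x] by simp
  qed
  have pmeas: "p t \<in> borel_measurable M" if "t \<ge> 1" for t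
    using that
  proof (induction t rule: dec_induct)
    case base then show ?case using A(9) by simp
  next
    case (step t)
    note [measurable] = step.IH A(11)[of t]
    have "(\<lambda>x. max pmin (p t x + kappa t * v t x)) \<in> borel_measurable M" using step by measurable
    then show ?case using A(12)[of t] step by (subst measurable_cong) auto
  qed
  have prange: "pmin \<le> p t x \<and> p t x \<le> 1" if "t \<ge> 1" "x \<in> space M" for t x
    using that(1)
  proof (induction t rule: dec_induct)
    case base then show ?case using A(10)[OF that(2)] by simp
  next
    case (step t)
    have t1: "t \<ge> 1" using step by simp
    have "p t x + kappa t * v t x \<le> 1"
    proof (cases "v t x \<ge> 0")
      case True
      then have "kappa t * v t x \<le> 1 * v t x" using kpos[OF t1] by (intro mult_right_mono) auto
      then show ?thesis using A(14)[OF t1 that(2)] by simp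
    next
      case False
      then have "kappa t * v t x \<le> 0" using kpos[OF t1] by (simp add: mult_nonneg_nonpos)
      then show ?thesis using step.IH by simp
    qed
    then show ?case using A(12)[OF t1 that(2)] A(7) by simp
  qed
  define H where "H = (\<lambda>t. hist_alg M p t)"
  have Hsub: "subalgebra M (H t)" for t unfolding H_def by (rule hist_sub) (use pmeas in auto)
  have Hsf: "sigma_finite_subalgebra M (H t)" for t
    by (rule finite_measure_subalgebra_is_sigma_finite, intro finite_measure_subalgebra.intro finite_measure_subalgebra_axioms.intro)
       (use Hsub PS.finite_measure_axioms in auto)
  have Hmono: "t \<le> s \<Longrightarrow> sets (H t) \<subseteq> sets (H s)" for t s unfolding H_def by (rule hist_mono)
  have pH: "p s \<in> borel_measurable (H t)" if "1 \<le> s" "s \<le> t" for s t unfolding H_def by (rule hist_meas[OF that])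
  have HM: "h \<in> borel_measurable (H t) \<Longrightarrow> h \<in> borel_measurable M" for h t
    by (rule measurable_from_subalg[OF Hsub])
  have Hup: "h \<in> borel_measurable (H t) \<Longrightarrow> t \<le> s \<Longrightarrow> h \<in> borel_measurable (H s)" for h t s
    by (rule measurable_from_subalg[of "H s" "H t"]) (use Hsub Hmono in \<open>auto simp: subalgebra_def\<close>)
  define u where "u = (\<lambda>t x. (p (Suc t) x - p t x) / kappa t)"
  have uH: "u t \<in> borel_measurable (H (Suc t))" if "t \<ge> 1" for t
  proof -
    note [measurable] = pH[of "Suc t" "Suc t"] pH[of t "Suc t"]
    show ?thesis unfolding u_def using that by measurable
  qed
  have uM: "u t \<in> borel_measurable M" if "t \<ge> 1" for t by (rule HM[OF uH[OF that]])
  have ubnd: "\<bar>u t x\<bar> \<le> Mb" and uge: "v t x \<le> u t x"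
    and ueq: "pmin + kappa t * Mb < p t x \<Longrightarrow> u t x = v t x"
    if "t \<ge> 1" "x \<in> space M" for t x
  proof -
    have k: "kappa t > 0" "kappa t \<le> 1" using kpos[OF that(1)] by auto
    have vb: "\<bar>v t x\<bar> \<le> Mb" using A(13)[OF that] .
    have pr: "pmin \<le> p t x" using prange[OF that] by simp
    have rec: "p (Suc t) x = max pmin (p t x + kappa t * v t x)" using A(12)[OF that] .
    have kv: "\<bar>kappa t * v t x\<bar> \<le> kappa t * Mb" using k vb by (simp add: abs_mult)
    have d: "\<bar>p (Suc t) x - p t x\<bar> \<le> kappa t * Mb" "kappa t * v t x \<le> p (Suc t) x - p t x"
      using rec pr kv by (auto simp: max_def abs_le_iff)
    have ud: "u t x * kappa t = p (Suc t) x - p t x" unfolding u_def using k by simp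
    show "\<bar>u t x\<bar> \<le> Mb"
    proof -
      have "\<bar>p (Suc t) x - p t x\<bar> = \<bar>u t x * kappa t\<bar>" by (simp only: ud)
      also have "\<dots> = \<bar>u t x\<bar> * kappa t" using k by (simp add: abs_mult)
      finally have "\<bar>u t x\<bar> * kappa t = \<bar>p (Suc t) x - p t x\<bar>" by simp
      then have "\<bar>u t x\<bar> * kappa t \<le> Mb * kappa t" using d(1) by (simp add: mult.commute)
      then show ?thesis using k by (meson mult_right_le_imp_le)
    qed
    show "v t x \<le> u t x"
    proof -
      have "v t x * kappa t \<le> u t x * kappa t" using d(2) ud by (simp add: mult.commute)
      then show ?thesis using k by simp
    qed
    assume "pmin + kappa t * Mb < p t x"
    then have "p (Suc t) x = p t x + kappa t * v t x" using rec kv by (auto simp: max_def abs_le_iff)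
    then show "u t x = v t x" unfolding u_def using k by simp
  qed
  have uint: "integrable M (u t)" if "t \<ge> 1" for t
    by (rule PS.integrable_const_bound[where B=Mb]) (use uM[OF that] ubnd[OF that] in auto)
  have vint: "integrable M (v t)" if "t \<ge> 1" for t
    by (rule PS.integrable_const_bound[where B=Mb]) (use A(11)[OF that] A(13)[OF that] in auto)
  define g where "g = (\<lambda>t. real_cond_exp M (H t) (u t))"
  define G where "G = (\<lambda>t x. max (- Mb) (min Mb (g t x)))"
  have gH: "g t \<in> borel_measurable (H t)" for t unfolding g_def by (rule borel_measurable_cond_exp)
  have GH: "G t \<in> borel_measurable (H t)" for t
  proof -
    note [measurable] = gH[of t]
    show ?thesis unfolding G_def by measurable
  qed
  have Gbnd: "\<bar>G t x\<bar> \<le> Mb" for t x unfolding G_def using Mb0 by auto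
  have Gg: "AE x in M. G t x = g t x" if t1: "t \<ge> 1" for t
  proof -
    have "AE x in M. g t x \<le> Mb" unfolding g_def
      by (rule sigma_finite_subalgebra.real_cond_exp_le_c[OF Hsf uint[OF t1]])
         (use ubnd[OF t1] in \<open>auto intro!: AE_I2 simp: abs_le_iff; force\<close>)
    moreover have "AE x in M. g t x \<ge> - Mb" unfolding g_def
      by (rule sigma_finite_subalgebra.real_cond_exp_ge_c[OF Hsf uint[OF t1]])
         (use ubnd[OF t1] in \<open>auto intro!: AE_I2 simp: abs_le_iff; force\<close>)
    ultimately show ?thesis unfolding G_def by eventually_elim auto
  qed
  have vce: "AE x in M. real_cond_exp M (H t) (v t) x = f (p t x)" if t1: "t \<ge> 1" for t
    using A(15)[OF t1] unfolding H_def f_def \<alpha>_def \<beta>_def by simp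
  have gge: "AE x in M. f (p t x) \<le> g t x" if t1: "t \<ge> 1" for t
  proof -
    have "AE x in M. real_cond_exp M (H t) (v t) x \<le> real_cond_exp M (H t) (u t) x"
      by (rule sigma_finite_subalgebra.real_cond_exp_mono[OF Hsf _ vint[OF t1] uint[OF t1]])
         (use uge[OF t1] in auto)
    then show ?thesis using vce[OF t1] unfolding g_def by eventually_elim auto
  qed
  have geq: "AE x in M. pmin + kappa t * Mb < p t x \<longrightarrow> g t x = f (p t x)" if t1: "t \<ge> 1" for t
  proof -
    define h where "h = (\<lambda>x. if pmin + kappa t * Mb < p t x then 1 else (0::real))"
    have hH: "h \<in> borel_measurable (H t)"
    proof -
      note [measurable] = pH[of t t]
      show ?thesis unfolding h_def using t1 by measurable
    qed
    have hM: "h \<in> borel_measurable M" by (rule HM[OF hH])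
    have hb: "\<bar>h x\<bar> \<le> 1" for x unfolding h_def by auto
    have ihu: "integrable M (\<lambda>x. h x * u t x)"
      by (rule PS.integrable_const_bound[where B=Mb])
         (use hM uM[OF t1] ubnd[OF t1] Mb0 in \<open>auto simp: h_def\<close>)
    have ihv: "integrable M (\<lambda>x. h x * v t x)"
      by (rule PS.integrable_const_bound[where B=Mb])
         (use hM A(11)[OF t1] A(13)[OF t1] Mb0 in \<open>auto simp: h_def\<close>)
    have e1: "AE x in M. real_cond_exp M (H t) (\<lambda>x. h x * u t x) x = h x * real_cond_exp M (H t) (u t) x"
      by (rule sigma_finite_subalgebra.real_cond_exp_mult[OF Hsf hH uM[OF t1] ihu])
    have e2: "AE x in M. real_cond_exp M (H t) (\<lambda>x. h x * v t x) x = h x * real_cond_exp M (H t) (v t) x"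
      by (rule sigma_finite_subalgebra.real_cond_exp_mult[OF Hsf hH A(11)[OF t1] ihv])
    have e3: "AE x in M. real_cond_exp M (H t) (\<lambda>x. h x * u t x) x = real_cond_exp M (H t) (\<lambda>x. h x * v t x) x"
      by (rule sigma_finite_subalgebra.real_cond_exp_cong[OF Hsf])
         (use ueq[OF t1] hM uM[OF t1] A(11)[OF t1] in \<open>auto simp: h_def\<close>)
    show ?thesis using e1 e2 e3 vce[OF t1] unfolding g_def
      by eventually_elim (auto simp: h_def split: if_splits)
  qed
  define F' where "F' = (\<lambda>t. H (Suc t))"
  define Z where "Z = (\<lambda>t x. kappa (Suc t) * (u (Suc t) x - G (Suc t) x))"
  define b where "b = (\<lambda>t. kappa (Suc t) * (2 * Mb))"
  have ms: "mart_setting M F' Z b"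
  proof (intro mart_setting.intro mart_setting_axioms.intro)
    show "prob_space M" by (rule A(1))
    show "subalgebra M (F' t)" for t unfolding F'_def by (rule Hsub)
    show "t \<le> s \<Longrightarrow> sets (F' t) \<subseteq> sets (F' s)" for t s unfolding F'_def by (rule Hmono) simp
    show "Z t \<in> borel_measurable (F' (Suc t))" for t
    proof -
      note [measurable] = uH[of "Suc t"] Hup[OF GH[of "Suc t"], of "Suc (Suc t)"]
      show ?thesis unfolding Z_def F'_def by measurable
    qed
    show "\<bar>Z t x\<bar> \<le> b t" if "x \<in> space M" for t x
    proof -
      have k: "kappa (Suc t) > 0" using kpos[of "Suc t"] by simp
      have "\<bar>u (Suc t) x - G (Suc t) x\<bar> \<le> 2 * Mb"
        using ubnd[of "Suc t" x] Gbnd[of "Suc t" x] that by simp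
      then have "kappa (Suc t) * \<bar>u (Suc t) x - G (Suc t) x\<bar> \<le> kappa (Suc t) * (2 * Mb)"
        using k by (intro mult_left_mono) auto
      then show ?thesis unfolding Z_def b_def using k by (simp add: abs_mult)
    qed
    show "(\<integral>x. Hf x * Z t x \<partial>M) = 0"
      if HfF: "Hf \<in> borel_measurable (F' t)" and HfK: "\<And>x. x \<in> space M \<Longrightarrow> \<bar>Hf x\<bar> \<le> K" for t Hf K
    proof -
      have t1: "Suc t \<ge> 1" by simp
      have HfH: "Hf \<in> borel_measurable (H (Suc t))" using HfF unfolding F'_def .
      have HfM: "Hf \<in> borel_measurable M" by (rule HM[OF HfH])
      have GM: "G (Suc t) \<in> borel_measurable M" by (rule HM[OF GH])
      have gM: "g (Suc t) \<in> borel_measurable M" by (rule HM[OF gH])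
      have iu: "integrable M (\<lambda>x. Hf x * u (Suc t) x)"
      proof (rule PS.integrable_const_bound[where B="K * Mb"])
        show "(\<lambda>x. Hf x * u (Suc t) x) \<in> borel_measurable M" using HfM uM[OF t1] by measurable
        have "\<bar>Hf x\<bar> * \<bar>u (Suc t) x\<bar> \<le> K * Mb" if "x \<in> space M" for x
          using HfK[OF that] ubnd[OF t1 that] by (intro mult_mono) auto
        then show "AE x in M. norm (Hf x * u (Suc t) x) \<le> K * Mb" by (auto simp: abs_mult)
      qed
      have iG: "integrable M (\<lambda>x. Hf x * G (Suc t) x)"
      proof (rule PS.integrable_const_bound[where B="K * Mb"])
        show "(\<lambda>x. Hf x * G (Suc t) x) \<in> borel_measurable M" using HfM GM by measurable
        have "\<bar>Hf x\<bar> * \<bar>G (Suc t) x\<bar> \<le> K * Mb" if "x \<in> space M" for x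
          using HfK[OF that] Gbnd[of "Suc t" x] by (intro mult_mono) auto
        then show "AE x in M. norm (Hf x * G (Suc t) x) \<le> K * Mb" by (auto simp: abs_mult)
      qed
      have "(\<integral>x. Hf x * G (Suc t) x \<partial>M) = (\<integral>x. Hf x * g (Suc t) x \<partial>M)"
        by (rule integral_cong_AE) (use HfM GM gM Gg[OF t1] in auto)
      also have "\<dots> = (\<integral>x. Hf x * u (Suc t) x \<partial>M)" unfolding g_def
        by (rule sigma_finite_subalgebra.real_cond_exp_intg(2)[OF Hsf iu HfH uM[OF t1]])
      finally have eq: "(\<integral>x. Hf x * G (Suc t) x \<partial>M) = (\<integral>x. Hf x * u (Suc t) x \<partial>M)" .
      have "(\<integral>x. Hf x * Z t x \<partial>M) = (\<integral>x. kappa (Suc t) * (Hf x * u (Suc t) x - Hf x * G (Suc t) x) \<partial>M)"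
        unfolding Z_def by (simp add: algebra_simps)
      also have "\<dots> = kappa (Suc t) * ((\<integral>x. Hf x * u (Suc t) x \<partial>M) - (\<integral>x. Hf x * G (Suc t) x \<partial>M))"
        using iu iG by simp
      also have "\<dots> = 0" using eq by simp
      finally show ?thesis .
    qed
  qed
  interpret MS: mart_setting M F' Z b by (rule ms)
  have sb: "summable (\<lambda>t. (b t)\<^sup>2)"
  proof -
    have "summable (\<lambda>t. (kappa (t + 1))\<^sup>2)" using summable_ignore_initial_segment[OF A(18), of 1] .
    then have "summable (\<lambda>t. (2 * Mb)\<^sup>2 * (kappa (Suc t))\<^sup>2)" by (intro summable_mult) simp
    then show ?thesis unfolding b_def by (simp add: power_mult_distrib mult.commute)
  qed
  have conv: "AE x in M. convergent (\<lambda>n. psum Z n x)" by (rule MS.mart_conv[OF sb])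
  obtain ps where ps: "pmin \<le> ps" "ps \<le> 1" "f ps \<le> 0" "pmin < ps \<Longrightarrow> f ps = 0"
    using br_exists[OF apos bnn A(6) A(7)] unfolding f_def by blast
  have vu: "virt_util c rho1 rho2 N l P q = - exp (- \<alpha> * q) / \<alpha> - q\<^sup>2 / 2 * (1 + \<beta>) + (1 + \<alpha>) / \<alpha>" for q
    unfolding virt_util_def beta_coef_def \<alpha>_def \<beta>_def Let_def by simp
  have lt: "virt_util c rho1 rho2 N l P q < virt_util c rho1 rho2 N l P ps"
    if "pmin \<le> q" "q \<le> 1" "q \<noteq> ps" for q
    unfolding vu using br_unique[OF apos bnn, of pmin ps q "(1 + \<alpha>) / \<alpha>"] ps that unfolding f_def by auto
  have br: "best_response c rho1 rho2 pmin N l P = ps"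
    unfolding best_response_def
  proof (rule the_equality)
    have "\<forall>q\<in>{pmin..1}. virt_util c rho1 rho2 N l P q \<le> virt_util c rho1 rho2 N l P ps"
    proof
      fix q assume q: "q \<in> {pmin..1}"
      show "virt_util c rho1 rho2 N l P q \<le> virt_util c rho1 rho2 N l P ps"
        by (cases "q = ps") (use lt[of q] q in auto)
    qed
    then show "ps \<in> {pmin..1} \<and> (\<forall>q\<in>{pmin..1}. virt_util c rho1 rho2 N l P q \<le> virt_util c rho1 rho2 N l P ps)"
      using ps by auto
  next
    fix p' assume p': "p' \<in> {pmin..1} \<and> (\<forall>q\<in>{pmin..1}. virt_util c rho1 rho2 N l P q \<le> virt_util c rho1 rho2 N l P p')"
    show "p' = ps"
    proof (rule ccontr)
      assume "p' \<noteq> ps"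
      then have "virt_util c rho1 rho2 N l P p' < virt_util c rho1 rho2 N l P ps" using lt p' by auto
      moreover have "virt_util c rho1 rho2 N l P ps \<le> virt_util c rho1 rho2 N l P p'" using p' ps by auto
      ultimately show False by simp
    qed
  qed
  have fmono: "f y < f x" if "x < y" for x y
  proof -
    have "exp (- \<alpha> * y) < exp (- \<alpha> * x)" using apos that by simp
    moreover have "x * \<beta> \<le> y * \<beta>" using bnn that by (intro mult_right_mono) auto
    ultimately show ?thesis unfolding f_def using that by linarith
  qed
  have k0: "kappa \<longlonglongrightarrow> 0"
  proof -
    have "(\<lambda>t. (kappa t)\<^sup>2) \<longlonglongrightarrow> 0" by (rule summable_LIMSEQ_zero[OF A(18)])
    then have "(\<lambda>t. sqrt ((kappa t)\<^sup>2)) \<longlonglongrightarrow> sqrt 0" by (intro tendsto_intros)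
    then have "(\<lambda>t. \<bar>kappa t\<bar>) \<longlonglongrightarrow> 0" by simp
    then show ?thesis by (simp add: tendsto_rabs_zero_iff)
  qed
  have "\<forall>t. AE x in M. t \<ge> 1 \<longrightarrow> (G t x = g t x \<and> f (p t x) \<le> g t x \<and> (pmin + kappa t * Mb < p t x \<longrightarrow> g t x = f (p t x)))"
  proof
    fix t
    show "AE x in M. t \<ge> 1 \<longrightarrow> (G t x = g t x \<and> f (p t x) \<le> g t x \<and> (pmin + kappa t * Mb < p t x \<longrightarrow> g t x = f (p t x)))"
    proof (cases "t \<ge> 1")
      case True
      show ?thesis using Gg[OF True] gge[OF True] geq[OF True] by eventually_elim auto
    next
      case False then show ?thesis by simp
    qed
  qed
  then have AEall: "AE x in M. \<forall>t. t \<ge> 1 \<longrightarrow> (G t x = g t x \<and> f (p t x) \<le> g t x \<and> (pmin + kappa t * Mb < p t x \<longrightarrow> g t x = f (p t x)))"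
    by (rule AE_all_countable[THEN iffD2])
  show ?thesis using AEall conv AE_space
  proof eventually_elim
    case (elim x)
    have x: "x \<in> space M" using elim by simp
    have c1: "\<And>t. t \<ge> 1 \<Longrightarrow> kappa t > 0" using kpos by simp
    have c4: "\<And>t. t \<ge> 1 \<Longrightarrow> pmin \<le> p t x \<and> p t x \<le> 1" using prange x by simp
    have c5: "\<And>t. t \<ge> 1 \<Longrightarrow> p (Suc t) x = p t x + kappa t * (G t x + (u t x - G t x))"
    proof -
      fix t :: nat assume t1: "t \<ge> 1"
      show "p (Suc t) x = p t x + kappa t * (G t x + (u t x - G t x))"
        unfolding u_def using kpos[OF t1] by simp
    qed
    have "(\<lambda>n. \<Sum>t=1..n. kappa t * (u t x - G t x)) = (\<lambda>n. psum Z n x)"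
      unfolding psum_def Z_def by (rule ext, rule sum_shift1[of "\<lambda>t. kappa t * (u t x - G t x)", symmetric])
    then have c6: "convergent (\<lambda>n. \<Sum>t=1..n. kappa t * (u t x - G t x))" using elim by simp
    have c7: "\<And>t. t \<ge> 1 \<Longrightarrow> G t x \<ge> f (p t x)" using elim by auto
    have c8: "\<And>t. t \<ge> 1 \<Longrightarrow> pmin + kappa t * Mb < p t x \<Longrightarrow> G t x = f (p t x)" using elim by auto
    have c9: "\<And>t. t \<ge> 1 \<Longrightarrow> \<bar>G t x\<bar> \<le> Mb" using Gbnd by simp
    have "(\<lambda>t. p t x) \<longlonglongrightarrow> ps"
      by (rule det_conv[where p="\<lambda>t. p t x" and g="\<lambda>t. G t x" and z="\<lambda>t. u t x - G t x", OF c1 k0 A(17) c4 c5 c6 c7 c8 c9 fmono ps(1) ps(3) ps(4) Mb0])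
    then show ?case unfolding br .
  qed
qed


end
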